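(* Let $\lambda\in\mathbb{R}$ and let $H_0:\mathbb{R}^n\times[0,T]\times\mathbb{R}^n\to\mathbb{R}$ satisfy: (a) $|H_0(x,t,p)-H_0(y,t,p)|\le C_1(\beta+|p|)|x-y|$ with $C_1\ge0$, $\beta\in\{0,1\}$; (b) $|H_0(x,t,p)-H_0(x,t,q)|\le(A_2|x|+B_2)|p-q|$ with $A_2,B_2\ge0$; (c) $p\mapsto H_0(x,t,p)$ convex; (d) $H_0\in C^2$; (e) $D_{pp}H_0$ positive definite everywhere. Let $u\in C(\mathbb{R}^n\times[0,T))$ be a viscosity solution of $$u_t+\lambda u+H_0(x,t,D_xu)=0\ \text{in }\mathbb{R}^n\times(0,T),\qquad u(x,0)=u_0(x).$$ Let $u$ be differentiable at $(x,t)\in\mathbb{R}^n\times(0,T)$ and let $(\xi,\eta)\in C^1([0,t];\mathbb{R}^n)^2$ solve $\xi'(s)=D_pH_0(\xi(s),s,\eta(s))$, $\eta'(s)=-D_xH_0(\xi(s),s,\eta(s))-\lambda\eta(s)$ on $[0,t]$ with $\xi(t)=x$, $\eta(t)=D_xu(x,t)$. Then $$|D_xu(x,t)-e^{-\lambda t}\eta(0)|\le\frac{C_1\beta}{C_1+\lambda}(e^{C_1t}-e^{-\lambda t})+|D_xu(x,t)|(e^{C_1t}-1)\ \ (\lambda\ne-C_1),$$ $$|D_xu(x,t)-e^{C_1t}\eta(0)|\le C_1\beta te^{C_1t}+|D_xu(x,t)|(e^{C_1t}-1)\ \ (\lambda=-C_1),$$ $$|D_xu(x,t)-e^{-\lambda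 t}\eta(0)|\le\frac{C_1\beta}{C_1-\lambda}(e^{(C_1-\lambda)t}-1)+|\eta(0)|(e^{(C_1-\lambda)t}-e^{-\lambda t})\ \ (\lambda\ne C_1),$$ $$|D_xu(x,t)-e^{-C_1t}\eta(0)|\le C_1\beta t+|\eta(0)|(1-e^{-C_1t})\ \ (\lambda=C_1).$$ Consequently $|D_xu(x,t)|\ge|\eta(0)|e^{-(C_1+\lambda)t}-\frac{C_1\beta}{C_1+\lambda}(1-e^{-(C_1+\lambda)t})$ if $\lambda\ne-C_1$; $|D_xu(x,t)|\ge|\eta(0)|-C_1\beta t$ if $\lambda=-C_1$; $|D_xu(x,t)|\le|\eta(0)|e^{(C_1-\lambda)t}+\frac{C_1\beta}{C_1-\lambda}(e^{(C_1-\lambda)t}-1)$ if $\lambda\ne C_1$; $|D_xu(x,t)|\le|\eta(0)|+C_1\beta t$ if $\lambda=C_1$.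
   Context: $T>0$, $u_0:\mathbb{R}^n\to\mathbb{R}$ Lipschitz. Viscosity solution of $u_t+F(x,t,u,D_xu)=0$, $u(\cdot,0)=u_0$: $u\in C(\mathbb{R}^n\times[0,T))$ with $u(\cdot,0)=u_0$ such that for every $\phi\in C^1(\mathbb{R}^n\times(0,T))$, if $u-\phi$ has a local max (resp. min) at $(x,t)\in\mathbb{R}^n\times(0,T)$ then $\phi_t+F(x,t,u(x,t),D_x\phi(x,t))\le0$ (resp. $\ge0$). Here $F(x,t,u,p)=\lambda u+H_0(x,t,p)$. *)

theory Defs
  imports "HOL-Analysis.Analysis"
begin

definition C2_on :: "'b::real_normed_vector set \<Rightarrow> ('b \<Rightarrow> real) \<Rightarrow> bool" where
  "C2_on S f \<longleftrightarrow> (\<exists>f' f''.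
      (\<forall>z\<in>S. (f has_derivative blinfun_apply (f' z)) (at z within S)) \<and>
      (\<forall>z\<in>S. (f' has_derivative blinfun_apply (f'' z)) (at z within S)) \<and>
      continuous_on S f'')"

definition viscosity_solution ::
  "real \<Rightarrow> real \<Rightarrow> ('a::euclidean_space \<Rightarrow> real \<Rightarrow> 'a \<Rightarrow> real) \<Rightarrow> ('a \<Rightarrow> real)
     \<Rightarrow> ('a \<Rightarrow> real \<Rightarrow> real) \<Rightarrow> bool" where
  "viscosity_solution T lam H0 u0 u \<longleftrightarrow>
     continuous_on (UNIV \<times> {0..<T}) (\<lambda>(x, t). u x t) \<and>
     (\<forall>x. u x 0 = u0 x) \<and>
     (\<forall>phi phix phit.
        ((\<forall>x t. 0 < t \<and> t < T \<longrightarrow>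
            ((\<lambda>(y, s). phi y s) has_derivative (\<lambda>(h, k). phix x t \<bullet> h + phit x t * k)) (at (x, t))) \<and>
         continuous_on (UNIV \<times> {0<..<T}) (\<lambda>(x, t). phix x t) \<and>
         continuous_on (UNIV \<times> {0<..<T}) (\<lambda>(x, t). phit x t)) \<longrightarrow>
        (\<forall>x t. 0 < t \<and> t < T \<longrightarrow>
           ((\<exists>e>0. \<forall>y s. 0 < s \<and> s < T \<and> dist (y, s) (x, t) < e \<longrightarrow>
                u y s - phi y s \<le> u x t - phi x t) \<longrightarrow>
              phit x t + lam * u x t + H0 x t (phix x t) \<le> 0) \<and>
           ((\<exists>e>0. \<forall>y s. 0 < s \<and> s < T \<and> dist (y, s) (x, t) < e \<longrightarrow>
                u y s - phi y s \<ge> u x t - phi x t) \<longrightarrow>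
              phit x t + lam * u x t + H0 x t (phix x t) \<ge> 0)))"

end

theory Submission imports Defs begin


lemma smooth_norm_deriv:
  fixes f :: "real \<Rightarrow> 'a::real_inner"
  assumes "e > 0" "(f has_vector_derivative f') (at s within S)"
  shows "((\<lambda>s. sqrt (f s \<bullet> f s + e^2)) has_real_derivative
           ((2 * (f s \<bullet> f')) * (inverse (sqrt (f s \<bullet> f s + e^2)) / 2))) (at s within S)"
proof -
  have pos: "0 < f s \<bullet> f s + e^2" using assms(1) by (simp add: add_nonneg_pos)
  have d: "(f has_derivative (\<lambda>h. h *\<^sub>R f')) (at s within S)"
    using assms(2) by (simp add: has_vector_derivative_def)
  have "((\<lambda>s. f s \<bullet> f s + e^2) has_derivative (\<lambda>h. f s \<bullet> (h *\<^sub>R f') + (h *\<^sub>R f') \<bullet> f s + 0)) (at s within S)"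
    by (intro has_derivative_add has_derivative_inner d has_derivative_const)
  then have "((\<lambda>s. f s \<bullet> f s + e^2) has_real_derivative (2 * (f s \<bullet> f'))) (at s within S)"
    by (simp add: has_field_derivative_def inner_commute algebra_simps) (erule has_derivative_eq_rhs, simp add: fun_eq_iff)
  from DERIV_chain2[OF DERIV_real_sqrt[OF pos] this] show ?thesis by (simp add: mult_ac)
qed

lemma smooth_norm_bounds:
  fixes v :: "'a::real_inner"
  assumes "e > 0"
  shows "norm v \<le> sqrt (v \<bullet> v + e^2)" "sqrt (v \<bullet> v + e^2) \<le> norm v + e"
    "0 < sqrt (v \<bullet> v + e^2)"
    "\<bar>v \<bullet> w\<bar> / sqrt (v \<bullet> v + e^2) \<le> norm w"
proof -
  have vv: "v \<bullet> v = (norm v)^2" by (simp add: power2_norm_eq_inner)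
  show 1: "norm v \<le> sqrt (v \<bullet> v + e^2)" unfolding vv
    by (metis real_sqrt_abs real_sqrt_le_mono abs_norm_cancel le_add_same_cancel1 zero_le_power2)
  have "(norm v)^2 + e^2 \<le> (norm v + e)^2" using assms by (simp add: power2_sum)
  then show "sqrt (v \<bullet> v + e^2) \<le> norm v + e" unfolding vv
    by (metis assms real_sqrt_le_mono real_sqrt_abs abs_of_nonneg add_nonneg_nonneg norm_ge_zero less_imp_le)
  show 3: "0 < sqrt (v \<bullet> v + e^2)" using assms by (simp add: add_nonneg_pos)
  have "\<bar>v \<bullet> w\<bar> \<le> norm v * norm w" by (rule Cauchy_Schwarz_ineq2)
  also have "\<dots> \<le> sqrt (v \<bullet> v + e^2) * norm w" using 1 by (simp add: mult_right_mono)
  finally show "\<bar>v \<bullet> w\<bar> / sqrt (v \<bullet> v + e^2) \<le> norm w" using 3 by (simp add: divide_le_eq mult.commute)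
qed

lemma gron_fwd:
  fixes f :: "real \<Rightarrow> 'a::real_inner"
  assumes ab: "a \<le> b" and K: "K \<ge> 0"
    and df: "\<And>s. s \<in> {a..b} \<Longrightarrow> (f has_vector_derivative f' s) (at s within {a..b})"
    and bd: "\<And>s. s \<in> {a..b} \<Longrightarrow> norm (f' s) \<le> \<alpha> s + K * norm (f s)"
    and dG: "\<And>s. s \<in> {a..b} \<Longrightarrow> (G has_real_derivative exp (- K * s) * \<alpha> s) (at s within {a..b})"
  shows "exp (- K * b) * norm (f b) \<le> exp (- K * a) * norm (f a) + (G b - G a)"
proof -
  have main: "exp (- K * b) * norm (f b) \<le> exp (- K * a) * norm (f a) + (G b - G a) + exp (- K * a) * e"
    if e: "e > 0" for e
  proof -
    define N where "N s = sqrt (f s \<bullet> f s + e^2)" for s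
    define N' where "N' s = (2 * (f s \<bullet> f' s)) * (inverse (sqrt (f s \<bullet> f s + e^2)) / 2)" for s
    define P where "P s = exp (- K * s) * N s - G s" for s
    define P' where "P' s = - K * exp (- K * s) * N s + N' s * exp (- K * s) - exp (- K * s) * \<alpha> s" for s
    have dN: "(N has_real_derivative N' s) (at s within {a..b})" if "s \<in> {a..b}" for s
      unfolding N_def N'_def by (rule smooth_norm_deriv[OF e df[OF that]])
    have dP: "(P has_real_derivative P' s) (at s within {a..b})" if "s \<in> {a..b}" for s
    proof -
      have "((\<lambda>s. exp (- K * s)) has_real_derivative (- K * exp (- K * s))) (at s within {a..b})"
        by (auto intro!: derivative_eq_intros)
      from DERIV_diff[OF DERIV_mult[OF this dN[OF that]] dG[OF that]]
      have "((\<lambda>s. exp (- K * s) * N s - G s) has_real_derivative P' s) (at s within {a..b})"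
        unfolding P'_def .
      moreover have "P = (\<lambda>s. exp (- K * s) * N s - G s)" by (simp add: fun_eq_iff P_def)
      ultimately show ?thesis by simp
    qed
    have N'b: "N' s \<le> norm (f' s)" for s
    proof -
      have "N' s = (f s \<bullet> f' s) / N s" unfolding N'_def N_def by (simp add: field_simps)
      also have "\<dots> \<le> \<bar>f s \<bullet> f' s\<bar> / N s"
        by (rule divide_right_mono) (use smooth_norm_bounds(3)[OF e, of "f s"] in \<open>auto simp: N_def\<close>)
      also have "\<dots> \<le> norm (f' s)" using smooth_norm_bounds(4)[OF e, of "f s" "f' s"] by (simp only: N_def)
      finally show ?thesis .
    qed
    have P'n: "P' s \<le> 0" if "s \<in> {a..b}" for s
    proof -
      have "N' s \<le> \<alpha> s + K * N s"
        using N'b[of s] bd[OF that] smooth_norm_bounds(1)[OF e, of "f s"] K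
        by (smt (verit) N_def mult_left_mono)
      then have "exp (- K * s) * N' s \<le> exp (- K * s) * (\<alpha> s + K * N s)" by simp
      then show ?thesis unfolding P'_def by (simp add: algebra_simps)
    qed
    obtain x where x: "x \<in> {a..b}" "P b - P a = (\<lambda>h. h * P' x) (b - a)"
    proof -
      have dP': "(P has_derivative (\<lambda>h. h * P' s)) (at s within {a..b})" if "a \<le> s" "s \<le> b" for s
        using dP[of s] that by (simp add: has_field_derivative_def mult_commute_abs)
      from mvt_very_simple[OF ab, of P "\<lambda>s h. h * P' s", OF dP'] show ?thesis using that by blast
    qed
    have "(b - a) * P' x \<le> 0" using P'n[OF x(1)] ab by (simp add: mult_nonneg_nonpos)
    then have "P b \<le> P a" using x(2) by (simp add: mult.commute)
    then have "exp (- K * b) * N b \<le> exp (- K * a) * N a + (G b - G a)" by (simp add: P_def)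
    moreover have "exp (- K * b) * norm (f b) \<le> exp (- K * b) * N b"
      using smooth_norm_bounds(1)[OF e, of "f b"] by (intro mult_left_mono) (simp_all add: N_def)
    moreover have "exp (- K * a) * N a \<le> exp (- K * a) * (norm (f a) + e)"
      using smooth_norm_bounds(2)[OF e, of "f a"] by (intro mult_left_mono) (simp_all add: N_def)
    moreover have "exp (- K * a) * (norm (f a) + e) = exp (- K * a) * norm (f a) + exp (- K * a) * e"
      by (simp add: distrib_left)
    ultimately show ?thesis by linarith
  qed
  show ?thesis
  proof (rule field_le_epsilon)
    fix d :: real assume d: "d > 0"
    have "exp (- K * b) * norm (f b) \<le> exp (- K * a) * norm (f a) + (G b - G a) + exp (- K * a) * (d / exp (- K * a))"
      by (rule main) (use d in simp)
    then show "exp (- K * b) * norm (f b) \<le> exp (- K * a) * norm (f a) + (G b - G a) + d" by simp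
  qed
qed

lemma gron_bwd:
  fixes f :: "real \<Rightarrow> 'a::real_inner"
  assumes ab: "a \<le> b" and K: "K \<ge> 0"
    and df: "\<And>s. s \<in> {a..b} \<Longrightarrow> (f has_vector_derivative f' s) (at s within {a..b})"
    and bd: "\<And>s. s \<in> {a..b} \<Longrightarrow> norm (f' s) \<le> \<alpha> s + K * norm (f s)"
    and dG: "\<And>s. s \<in> {a..b} \<Longrightarrow> (G has_real_derivative exp (K * s) * \<alpha> s) (at s within {a..b})"
  shows "exp (K * a) * norm (f a) \<le> exp (K * b) * norm (f b) + (G b - G a)"
proof -
  have main: "exp (K * a) * norm (f a) \<le> exp (K * b) * norm (f b) + (G b - G a) + exp (K * b) * e"
    if e: "e > 0" for e
  proof -
    define N where "N s = sqrt (f s \<bullet> f s + e^2)" for s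
    define N' where "N' s = (2 * (f s \<bullet> f' s)) * (inverse (sqrt (f s \<bullet> f s + e^2)) / 2)" for s
    define P where "P s = exp (K * s) * N s + G s" for s
    define P' where "P' s = K * exp (K * s) * N s + N' s * exp (K * s) + exp (K * s) * \<alpha> s" for s
    have dN: "(N has_real_derivative N' s) (at s within {a..b})" if "s \<in> {a..b}" for s
      unfolding N_def N'_def by (rule smooth_norm_deriv[OF e df[OF that]])
    have dP: "(P has_real_derivative P' s) (at s within {a..b})" if "s \<in> {a..b}" for s
    proof -
      have "((\<lambda>s. exp (K * s)) has_real_derivative (K * exp (K * s))) (at s within {a..b})"
        by (auto intro!: derivative_eq_intros)
      from DERIV_add[OF DERIV_mult[OF this dN[OF that]] dG[OF that]]
      have "((\<lambda>s. exp (K * s) * N s + G s) has_real_derivative P' s) (at s within {a..b})"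
        unfolding P'_def .
      moreover have "P = (\<lambda>s. exp (K * s) * N s + G s)" by (simp add: fun_eq_iff P_def)
      ultimately show ?thesis by simp
    qed
    have N'b: "- norm (f' s) \<le> N' s" for s
    proof -
      have "N' s = (f s \<bullet> f' s) / N s" unfolding N'_def N_def by (simp add: field_simps)
      moreover have "- (\<bar>f s \<bullet> f' s\<bar> / N s) \<le> (f s \<bullet> f' s) / N s"
        unfolding minus_divide_left by (rule divide_right_mono) (use smooth_norm_bounds(3)[OF e, of "f s"] in \<open>auto simp: N_def\<close>)
      moreover have "\<bar>f s \<bullet> f' s\<bar> / N s \<le> norm (f' s)" using smooth_norm_bounds(4)[OF e, of "f s" "f' s"] by (simp only: N_def)
      ultimately show ?thesis by linarith
    qed
    have P'n: "P' s \<ge> 0" if "s \<in> {a..b}" for s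
    proof -
      have "- (\<alpha> s + K * N s) \<le> N' s"
        using N'b[of s] bd[OF that] smooth_norm_bounds(1)[OF e, of "f s"] K
        by (smt (verit) N_def mult_left_mono)
      then have "exp (K * s) * (- (\<alpha> s + K * N s)) \<le> exp (K * s) * N' s" by simp
      then show ?thesis unfolding P'_def by (simp add: algebra_simps)
    qed
    obtain x where x: "x \<in> {a..b}" "P b - P a = (\<lambda>h. h * P' x) (b - a)"
    proof -
      have dP': "(P has_derivative (\<lambda>h. h * P' s)) (at s within {a..b})" if "a \<le> s" "s \<le> b" for s
        using dP[of s] that by (simp add: has_field_derivative_def mult_commute_abs)
      from mvt_very_simple[OF ab, of P "\<lambda>s h. h * P' s", OF dP'] show ?thesis using that by blast
    qed
    have "(b - a) * P' x \<ge> 0" using P'n[OF x(1)] ab by simp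
    then have "P a \<le> P b" using x(2) by (simp add: mult.commute)
    then have "exp (K * a) * N a \<le> exp (K * b) * N b + (G b - G a)" by (simp add: P_def)
    moreover have "exp (K * a) * norm (f a) \<le> exp (K * a) * N a"
      using smooth_norm_bounds(1)[OF e, of "f a"] by (intro mult_left_mono) (simp_all add: N_def)
    moreover have "exp (K * b) * N b \<le> exp (K * b) * (norm (f b) + e)"
      using smooth_norm_bounds(2)[OF e, of "f b"] by (intro mult_left_mono) (simp_all add: N_def)
    moreover have "exp (K * b) * (norm (f b) + e) = exp (K * b) * norm (f b) + exp (K * b) * e"
      by (simp add: distrib_left)
    ultimately show ?thesis by linarith
  qed
  show ?thesis
  proof (rule field_le_epsilon)
    fix d :: real assume d: "d > 0"
    have "exp (K * a) * norm (f a) \<le> exp (K * b) * norm (f b) + (G b - G a) + exp (K * b) * (d / exp (K * b))"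
      by (rule main) (use d in simp)
    then show "exp (K * a) * norm (f a) \<le> exp (K * b) * norm (f b) + (G b - G a) + d" by simp
  qed
qed

lemma deriv_lip_bound:
  fixes g :: "'a::real_inner \<Rightarrow> real"
  assumes dg: "(g has_derivative (\<lambda>v. d \<bullet> v)) (at x)"
    and lip: "\<And>y. \<bar>g y - g x\<bar> \<le> B * norm (y - x)" and B: "B \<ge> 0"
  shows "norm d \<le> B"
proof -
  have "((\<lambda>h. x + h *\<^sub>R d) has_derivative (\<lambda>h. h *\<^sub>R d)) (at 0)"
    by (auto intro!: derivative_eq_intros)
  from diff_chain_at[OF this, of g "\<lambda>v. d \<bullet> v"] dg
  have "((\<lambda>h. g (x + h *\<^sub>R d)) has_real_derivative (d \<bullet> d)) (at 0)"
    by (simp add: o_def has_field_derivative_def) (erule has_derivative_eq_rhs, simp add: fun_eq_iff)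
  then have lim: "((\<lambda>h. (g (x + h *\<^sub>R d) - g x) / h) \<longlongrightarrow> d \<bullet> d) (at 0)"
    unfolding DERIV_def by simp
  have "\<bar>d \<bullet> d\<bar> \<le> B * norm d"
  proof (rule tendsto_upperbound[OF tendsto_rabs[OF lim]])
    show "\<forall>\<^sub>F h in at 0. \<bar>(g (x + h *\<^sub>R d) - g x) / h\<bar> \<le> B * norm d"
    proof (rule eventually_at_filter[THEN iffD2], intro always_eventually allI impI)
      fix h :: real assume "h \<noteq> 0" "h \<in> UNIV"
      have "\<bar>g (x + h *\<^sub>R d) - g x\<bar> \<le> B * (\<bar>h\<bar> * norm d)" using lip[of "x + h *\<^sub>R d"] by simp
      then show "\<bar>(g (x + h *\<^sub>R d) - g x) / h\<bar> \<le> B * norm d" using \<open>h \<noteq> 0\<close>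
        by (simp add: abs_divide divide_le_eq mult_ac)
    qed
  qed simp
  then have "norm d * norm d \<le> B * norm d" by (simp add: power2_norm_eq_inner[symmetric] power2_eq_square)
  then show ?thesis by (cases "norm d = 0") (use B in auto)
qed




theorem proposition6p1:
  fixes T lam C1 beta A2 B2 :: real
    and H0 :: "'a::euclidean_space \<Rightarrow> real \<Rightarrow> 'a \<Rightarrow> real"
    and Dx Dp :: "'a \<Rightarrow> real \<Rightarrow> 'a \<Rightarrow> 'a"
    and u0 :: "'a \<Rightarrow> real" and u :: "'a \<Rightarrow> real \<Rightarrow> real"
    and x :: 'a and t :: real and Du :: 'a and ut :: real
    and xi eta :: "real \<Rightarrow> 'a"
  assumes T_pos: "T > 0"
    and u0_lip: "\<exists>L. L-lipschitz_on UNIV u0"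
    and C1_nonneg: "C1 \<ge> 0" and beta01: "beta \<in> {0, 1}"
    and Hx: "\<And>x y t p. t \<in> {0..T} \<Longrightarrow>
               \<bar>H0 x t p - H0 y t p\<bar> \<le> C1 * (beta + norm p) * norm (x - y)"
    and A2_nonneg: "A2 \<ge> 0" and B2_nonneg: "B2 \<ge> 0"
    and Hp: "\<And>x t p q. t \<in> {0..T} \<Longrightarrow>
               \<bar>H0 x t p - H0 x t q\<bar> \<le> (A2 * norm x + B2) * norm (p - q)"
    and Hconv: "\<And>x t. t \<in> {0..T} \<Longrightarrow> convex_on UNIV (H0 x t)"
    and HC2: "C2_on (UNIV \<times> {0..T} \<times> UNIV) (\<lambda>(x, t, p). H0 x t p)"
    and Dx_def: "\<And>x t p. t \<in> {0..T} \<Longrightarrow>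
               ((\<lambda>y. H0 y t p) has_derivative (\<lambda>v. Dx x t p \<bullet> v)) (at x)"
    and Dp_def: "\<And>x t p. t \<in> {0..T} \<Longrightarrow>
               ((\<lambda>q. H0 x t q) has_derivative (\<lambda>v. Dp x t p \<bullet> v)) (at p)"
    and Hpp_posdef: "\<And>x t p. t \<in> {0..T} \<Longrightarrow>
               \<exists>L. (Dp x t has_derivative L) (at p) \<and> (\<forall>v. v \<noteq> 0 \<longrightarrow> v \<bullet> L v > 0)"
    and visc: "viscosity_solution T lam H0 u0 u"
    and t_in: "0 < t" "t < T"
    and u_diff: "((\<lambda>(y, s). u y s) has_derivative (\<lambda>(h, k). Du \<bullet> h + ut * k)) (at (x, t))"
    and xi_ode: "\<And>s. s \<in> {0..t} \<Longrightarrow>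
               (xi has_vector_derivative Dp (xi s) s (eta s)) (at s within {0..t})"
    and eta_ode: "\<And>s. s \<in> {0..t} \<Longrightarrow>
               (eta has_vector_derivative (- Dx (xi s) s (eta s) - lam *\<^sub>R eta s)) (at s within {0..t})"
    and xi_end: "xi t = x" and eta_end: "eta t = Du"
  shows
    "(lam \<noteq> - C1 \<longrightarrow> norm (Du - exp (- lam * t) *\<^sub>R eta 0)
        \<le> C1 * beta / (C1 + lam) * (exp (C1 * t) - exp (- lam * t)) + norm Du * (exp (C1 * t) - 1)) \<and>
     (lam = - C1 \<longrightarrow> norm (Du - exp (C1 * t) *\<^sub>R eta 0)
        \<le> C1 * beta * t * exp (C1 * t) + norm Du * (exp (C1 * t) - 1)) \<and>
     (lam \<noteq> C1 \<longrightarrow> norm (Du - exp (- lam * t) *\<^sub>R eta 0)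
        \<le> C1 * beta / (C1 - lam) * (exp ((C1 - lam) * t) - 1)
           + norm (eta 0) * (exp ((C1 - lam) * t) - exp (- lam * t))) \<and>
     (lam = C1 \<longrightarrow> norm (Du - exp (- C1 * t) *\<^sub>R eta 0)
        \<le> C1 * beta * t + norm (eta 0) * (1 - exp (- C1 * t))) \<and>
     (lam \<noteq> - C1 \<longrightarrow> norm Du \<ge> norm (eta 0) * exp (- (C1 + lam) * t)
        - C1 * beta / (C1 + lam) * (1 - exp (- (C1 + lam) * t))) \<and>
     (lam = - C1 \<longrightarrow> norm Du \<ge> norm (eta 0) - C1 * beta * t) \<and>
     (lam \<noteq> C1 \<longrightarrow> norm Du \<le> norm (eta 0) * exp ((C1 - lam) * t)
        + C1 * beta / (C1 - lam) * (exp ((C1 - lam) * t) - 1)) \<and>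
     (lam = C1 \<longrightarrow> norm Du \<le> norm (eta 0) + C1 * beta * t)"
  proof -
  have beta0: "beta \<ge> 0" using beta01 by auto
  have sT: "s \<in> {0..T}" if "s \<in> {0..t}" for s using that t_in by auto
  have Dxb: "norm (Dx (xi s) s (eta s)) \<le> C1 * (beta + norm (eta s))" if "s \<in> {0..t}" for s
  proof (rule deriv_lip_bound[OF Dx_def[OF sT[OF that]]])
    fix y show "\<bar>H0 y s (eta s) - H0 (xi s) s (eta s)\<bar> \<le> C1 * (beta + norm (eta s)) * norm (y - xi s)"
      using Hx[OF sT[OF that]] by blast
    show "0 \<le> C1 * (beta + norm (eta s))" using C1_nonneg beta0 by simp
  qed
  define w where "w s = exp (lam * s) *\<^sub>R eta s" for s
  define w' where "w' s = - (exp (lam * s) *\<^sub>R Dx (xi s) s (eta s))" for s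
  have dw: "(w has_vector_derivative w' s) (at s within {0..t})" if "s \<in> {0..t}" for s
  proof -
    have e: "((\<lambda>s. exp (lam* s)) has_real_derivative (lam * exp (lam* s))) (at s within {0..t})"
      by (auto intro!: derivative_eq_intros)
    from has_vector_derivative_scaleR[OF e eta_ode[OF that]] show ?thesis
      unfolding w_def[abs_def] w'_def by (simp add: algebra_simps)
  qed
  have nw: "norm (w s) = exp (lam* s) * norm (eta s)" for s by (simp add: w_def)
  have w'b: "norm (w' s) \<le> C1*beta*exp (lam* s) + C1 * norm (w s)" if "s \<in> {0..t}" for s
  proof -
    have "norm (w' s) = exp (lam* s) * norm (Dx (xi s) s (eta s))" by (simp add: w'_def)
    also have "\<dots> \<le> exp (lam* s) * (C1*(beta + norm (eta s)))" using Dxb[OF that] by simp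
    finally show ?thesis by (simp add: nw algebra_simps)
  qed
  have w0: "w 0 = eta 0" by (simp add: w_def)
  have wt: "w t = exp (lam*t) *\<^sub>R Du" by (simp add: w_def eta_end)
  have nDu: "norm (w t) = exp (lam*t) * norm Du" by (simp add: wt)
  have nkey: "norm (Du - exp (-lam*t) *\<^sub>R eta 0) = exp (-lam*t) * norm (w t - w 0)"
  proof -
    have "Du - exp (-lam*t) *\<^sub>R eta 0 = exp (-lam*t) *\<^sub>R (w t - w 0)"
      by (simp add: wt w0 algebra_simps exp_minus_inverse mult.commute)
    then show ?thesis by simp
  qed
  have fwd: "exp (-C1*t) * norm (w t - w 0) \<le> G t - G 0"
    if dG: "\<And>s. s\<in>{0..t} \<Longrightarrow> (G has_real_derivative exp (-C1* s) * (C1*beta*exp (lam* s) + C1*norm (eta 0))) (at s within {0..t})" for G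
  proof -
    have "exp (-C1*t) * norm ((\<lambda>s. w s - w 0) t) \<le> exp (-C1*0) * norm ((\<lambda>s. w s - w 0) 0) + (G t - G 0)"
    proof (rule gron_fwd[where f'=w' and \<alpha> = "\<lambda>s. C1*beta*exp (lam* s) + C1*norm (eta 0)"])
      show "0 \<le> t" using t_in by simp
      show "0 \<le> C1" by (rule C1_nonneg)
      fix s assume s: "s \<in> {0..t}"
      show "((\<lambda>s. w s - w 0) has_vector_derivative w' s) (at s within {0..t})"
        using dw[OF s] by (simp add: has_vector_derivative_diff_const)
      have tr: "norm (w s) \<le> norm (w s - w 0) + norm (eta 0)" using norm_triangle_sub[of "w s" "w 0"] w0 by simp
      have "C1 * norm (w s) \<le> C1 * norm (w s - w 0) + C1 * norm (eta 0)"
        using mult_left_mono[OF tr C1_nonneg] by (simp add: distrib_left)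
      then show "norm (w' s) \<le> C1*beta*exp (lam* s) + C1*norm (eta 0) + C1 * norm (w s - w 0)"
        using w'b[OF s] by linarith
      show "(G has_real_derivative exp (-C1* s) * (C1*beta*exp (lam* s) + C1*norm (eta 0))) (at s within {0..t})"
        by (rule dG[OF s])
    qed
    then show ?thesis by simp
  qed
  have bwd: "norm (w t - w 0) \<le> G t - G 0"
    if dG: "\<And>s. s\<in>{0..t} \<Longrightarrow> (G has_real_derivative exp (C1* s) * (C1*beta*exp (lam* s) + C1*(exp (lam*t) * norm Du))) (at s within {0..t})" for G
  proof -
    have "exp (C1*0) * norm ((\<lambda>s. w s - w t) 0) \<le> exp (C1*t) * norm ((\<lambda>s. w s - w t) t) + (G t - G 0)"
    proof (rule gron_bwd[where f'=w' and \<alpha> = "\<lambda>s. C1*beta*exp (lam* s) + C1*(exp (lam*t) * norm Du)"])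
      show "0 \<le> t" using t_in by simp
      show "0 \<le> C1" by (rule C1_nonneg)
      fix s assume s: "s \<in> {0..t}"
      show "((\<lambda>s. w s - w t) has_vector_derivative w' s) (at s within {0..t})"
        using dw[OF s] by (simp add: has_vector_derivative_diff_const)
      have tr: "norm (w s) \<le> norm (w s - w t) + exp (lam*t) * norm Du" using norm_triangle_sub[of "w s" "w t"] nDu by simp
      have "C1 * norm (w s) \<le> C1 * norm (w s - w t) + C1 * (exp (lam*t) * norm Du)"
        using mult_left_mono[OF tr C1_nonneg] by (simp add: distrib_left)
      then show "norm (w' s) \<le> C1*beta*exp (lam* s) + C1*(exp (lam*t) * norm Du) + C1 * norm (w s - w t)"
        using w'b[OF s] by linarith
      show "(G has_real_derivative exp (C1* s) * (C1*beta*exp (lam* s) + C1*(exp (lam*t) * norm Du))) (at s within {0..t})"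
        by (rule dG[OF s])
    qed
    then show ?thesis by (simp add: norm_minus_commute)
  qed
  define p where "p = exp (C1*t)"
  define q where "q = exp (lam*t)"
  define D where "D = norm (w t - w 0)"
  define n0 where "n0 = norm (eta 0)"
  define nD where "nD = norm Du"
  have p: "p > 0" and q: "q > 0" by (simp_all add: p_def q_def)
  have e1: "exp (-lam*t) = 1/q" by (simp add: q_def exp_minus field_simps)
  have e3: "exp ((C1-lam)*t) = p/q" by (simp add: p_def q_def exp_diff[symmetric] left_diff_distrib)
  have e4: "exp (- (C1+lam)*t) = 1/(p*q)" by (simp add: p_def q_def exp_add[symmetric] exp_minus field_simps distrib_right)
  have e5: "exp (-C1*t) = 1/p" by (simp add: p_def exp_minus field_simps)
  have est1: "norm (Du - exp (- lam * t) *\<^sub>R eta 0)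
        \<le> C1 * beta / (C1 + lam) * (exp (C1 * t) - exp (- lam * t)) + norm Du * (exp (C1 * t) - 1)"
    if ne: "lam \<noteq> - C1"
  proof -
    have ne': "C1 + lam \<noteq> 0" using ne by auto
    define c where "c = C1*beta/(C1+lam)"
    have hc: "c*(C1+lam) = C1*beta" using ne' by (simp add: c_def)
    define G where "G s = c*(exp (C1 * s)*exp (lam * s)) + exp (lam*t)*norm Du*exp (C1 * s)" for s
    have "norm (w t - w 0) \<le> G t - G 0"
    proof (rule bwd)
      fix s assume "s \<in> {0..t}"
      have "(G has_real_derivative c*(C1+lam)*(exp (C1 * s)*exp (lam * s)) + exp (lam*t)*norm Du*(C1*exp (C1 * s))) (at s within {0..t})"
        unfolding G_def[abs_def] by (auto intro!: derivative_eq_intros simp: algebra_simps)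
      then show "(G has_real_derivative exp (C1 * s) * (C1*beta*exp (lam * s) + C1*(exp (lam*t) * norm Du))) (at s within {0..t})"
        unfolding hc by (rule DERIV_cong) (simp add: algebra_simps)
    qed
    moreover have "G t - G 0 = c*(p*q-1) + q*nD*(p-1)" by (simp add: G_def p_def q_def nD_def algebra_simps)
    ultimately have "D \<le> c*(p*q-1) + q*nD*(p-1)" by (simp add: D_def)
    then have "(1/q) * D \<le> (1/q) * (c*(p*q-1) + q*nD*(p-1))"
      by (rule mult_left_mono) (use q in simp)
    also have "\<dots> = c * (p - 1/q) + nD * (p - 1)"
      using q by (simp add: field_simps)
    also have "\<dots> = C1 * beta / (C1 + lam) * (p - 1/q) + nD * (p - 1)" by (simp add: c_def)
    finally show ?thesis using nkey unfolding e1 p_def[symmetric] by (simp add: D_def nD_def)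
  qed
  have est2: "norm (Du - exp (C1 * t) *\<^sub>R eta 0)
        \<le> C1 * beta * t * exp (C1 * t) + norm Du * (exp (C1 * t) - 1)"
    if eq: "lam = - C1"
  proof -
    define G where "G s = C1*beta * s + exp (lam*t)*norm Du*exp (C1 * s)" for s
    have "norm (w t - w 0) \<le> G t - G 0"
    proof (rule bwd)
      fix s assume "s \<in> {0..t}"
      have ee: "exp (lam * s) = 1 / exp (C1 * s)" using eq by (simp add: exp_minus field_simps)
      show "(G has_real_derivative exp (C1 * s) * (C1*beta*exp (lam * s) + C1*(exp (lam*t) * norm Du))) (at s within {0..t})"
        unfolding G_def[abs_def]
        by (auto intro!: derivative_eq_intros simp: ee field_simps)
    qed
    then have "D \<le> C1*beta*t + q*nD*(p-1)"
      by (simp add: G_def D_def p_def q_def nD_def algebra_simps)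
    then have "p * D \<le> p * (C1*beta*t + q*nD*(p-1))"
      by (rule mult_left_mono) (use p in simp)
    also have "\<dots> = C1 * beta * t * p + nD * (p - 1)"
      using eq by (simp add: p_def q_def field_simps exp_minus)
    finally have "p * D \<le> C1 * beta * t * p + nD * (p - 1)" .
    moreover have "norm (Du - exp (C1 * t) *\<^sub>R eta 0) = p * D" using nkey eq by (simp add: p_def D_def)
    ultimately show ?thesis unfolding p_def[symmetric] by (simp add: nD_def)
  qed
  have est3: "norm (Du - exp (- lam * t) *\<^sub>R eta 0)
        \<le> C1 * beta / (C1 - lam) * (exp ((C1 - lam) * t) - 1)
           + norm (eta 0) * (exp ((C1 - lam) * t) - exp (- lam * t))"
    if ne: "lam \<noteq> C1"
  proof -
    have ne': "lam - C1 \<noteq> 0" "C1 - lam \<noteq> 0" using ne by auto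
    define c where "c = C1*beta/(lam-C1)"
    have hc: "c*(lam-C1) = C1*beta" using ne' by (simp add: c_def)
    define G where "G s = c*(exp (-C1 * s)*exp (lam * s)) - n0*exp (-C1 * s)" for s
    have "exp (-C1*t) * norm (w t - w 0) \<le> G t - G 0"
    proof (rule fwd)
      fix s assume "s \<in> {0..t}"
      have "(G has_real_derivative c*(lam-C1)*(exp (-C1 * s)*exp (lam * s)) + n0*(C1*exp (-C1 * s))) (at s within {0..t})"
        unfolding G_def[abs_def] by (auto intro!: derivative_eq_intros simp: algebra_simps)
      then show "(G has_real_derivative exp (-C1 * s) * (C1*beta*exp (lam * s) + C1*norm (eta 0))) (at s within {0..t})"
        unfolding hc by (rule DERIV_cong) (simp add: algebra_simps n0_def)
    qed
    moreover have "G t - G 0 = c*((1/p)*q - 1) + n0*(1 - 1/p)"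
      unfolding G_def e5 q_def[symmetric] by (simp add: algebra_simps)
    ultimately have H: "(1/p) * D \<le> c*((1/p)*q - 1) + n0*(1 - 1/p)"
      unfolding e5 by (simp add: D_def)
    have "(p/q) * ((1/p) * D) \<le> (p/q) * (c*((1/p)*q - 1) + n0*(1 - 1/p))"
      by (rule mult_left_mono[OF H]) (use p q in simp)
    moreover have "(p/q) * ((1/p) * D) = (1/q) * D" using p by simp
    moreover have "(p/q) * (c*((1/p)*q - 1) + n0*(1 - 1/p)) = c * (1 - p/q) + n0 * (p/q - 1/q)"
      using p q by (simp add: field_simps)
    moreover have "c * (1 - p/q) = C1 * beta / (C1 - lam) * (p/q - 1)"
      using ne' q by (simp add: c_def field_simps)
    ultimately have "(1/q) * D \<le> C1 * beta / (C1 - lam) * (p/q - 1) + n0 * (p/q - 1/q)" by simp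
    then show ?thesis using nkey unfolding e1 e3 by (simp add: D_def n0_def)
  qed
  have est4: "norm (Du - exp (- C1 * t) *\<^sub>R eta 0) \<le> C1 * beta * t + norm (eta 0) * (1 - exp (- C1 * t))"
    if eq: "lam = C1"
  proof -
    define G where "G s = C1*beta * s - norm (eta 0)*exp (-C1 * s)" for s
    have "exp (-C1*t) * norm (w t - w 0) \<le> G t - G 0"
    proof (rule fwd)
      fix s assume "s \<in> {0..t}"
      have ee: "exp (-C1 * s) * exp (lam * s) = 1" using eq by (simp add: exp_minus field_simps)
      show "(G has_real_derivative exp (-C1 * s) * (C1*beta*exp (lam * s) + C1*norm (eta 0))) (at s within {0..t})"
      proof (rule DERIV_cong)
        show "(G has_real_derivative C1*beta + norm (eta 0)*(C1*exp (-C1 * s))) (at s within {0..t})"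
          unfolding G_def[abs_def] by (auto intro!: derivative_eq_intros simp: algebra_simps)
        have "exp (-C1 * s) * (C1*beta*exp (lam * s)) = C1*beta*(exp (-C1 * s) * exp (lam * s))"
          by (simp only: mult_ac)
        then show "C1*beta + norm (eta 0)*(C1*exp (-C1 * s)) = exp (-C1 * s) * (C1*beta*exp (lam * s) + C1*norm (eta 0))"
          unfolding distrib_left ee by simp
      qed
    qed
    moreover have "norm (Du - exp (- C1 * t) *\<^sub>R eta 0) = exp (-C1*t) * norm (w t - w 0)"
      using nkey eq by simp
    ultimately show ?thesis by (simp add: G_def algebra_simps)
  qed
  have tri1: "norm (c *\<^sub>R v) - norm u \<le> norm (u - c *\<^sub>R v)" for c and u v :: 'a
    by (metis norm_minus_commute norm_triangle_ineq2)
  have tri2: "norm u \<le> norm (u - c *\<^sub>R v) + norm (c *\<^sub>R v)" for c and u v :: 'a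
    by (metis diff_add_cancel norm_triangle_ineq)
  have est5: "norm Du \<ge> norm (eta 0) * exp (- (C1 + lam) * t)
        - C1 * beta / (C1 + lam) * (1 - exp (- (C1 + lam) * t))" if ne: "lam \<noteq> - C1"
  proof -
    have ne': "C1 + lam \<noteq> 0" using ne by auto
    have "n0/q - nD \<le> C1 * beta / (C1 + lam) * (p - 1/q) + nD * (p - 1)"
      using est1[OF ne] tri1[of "exp (- lam * t)" "eta 0" Du] q
      unfolding e1 p_def[symmetric] by (simp add: n0_def nD_def)
    then have "(n0/q - C1 * beta / (C1 + lam) * (p - 1/q)) / p \<le> nD" using p
      by (simp add: divide_le_eq algebra_simps)
    moreover have "(n0/q - C1 * beta / (C1 + lam) * (p - 1/q)) / p
        = n0 * (1/(p*q)) - C1 * beta / (C1 + lam) * (1 - 1/(p*q))"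
    proof -
      have "(n0/q - c * (p - 1/q)) / p = n0 * (1/(p*q)) - c * (1 - 1/(p*q))" for c
        using p q by (simp add: field_simps)
      then show ?thesis .
    qed
    ultimately show ?thesis unfolding e4 by (simp add: n0_def nD_def)
  qed
  have est6: "norm Du \<ge> norm (eta 0) - C1 * beta * t" if eq: "lam = - C1"
  proof -
    have "p * n0 - nD \<le> C1 * beta * t * p + nD * (p - 1)"
      using est2[OF eq] tri1[of "exp (C1 * t)" "eta 0" Du] p
      unfolding p_def[symmetric] by (simp add: n0_def nD_def)
    then have "p * (n0 - C1 * beta * t) \<le> p * nD" by (simp add: algebra_simps)
    then show ?thesis using p by (simp add: n0_def nD_def)
  qed
  have est7: "norm Du \<le> norm (eta 0) * exp ((C1 - lam) * t)
        + C1 * beta / (C1 - lam) * (exp ((C1 - lam) * t) - 1)" if ne: "lam \<noteq> C1"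
  proof -
    have "nD \<le> C1 * beta / (C1 - lam) * (p/q - 1) + n0 * (p/q - 1/q) + n0/q"
      using est3[OF ne] tri2[of Du "exp (- lam * t)" "eta 0"] q
      unfolding e1 e3 by (simp add: n0_def nD_def)
    then show ?thesis unfolding e3 by (simp add: n0_def nD_def algebra_simps)
  qed
  have est8: "norm Du \<le> norm (eta 0) + C1 * beta * t" if eq: "lam = C1"
  proof -
    have "nD \<le> C1 * beta * t + n0 * (1 - 1/p) + n0/p"
      using est4[OF eq] tri2[of Du "exp (- C1 * t)" "eta 0"] p
      unfolding e5 by (simp add: n0_def nD_def)
    then show ?thesis by (simp add: n0_def nD_def algebra_simps)
  qed
  show ?thesis using est1 est2 est3 est4 est5 est6 est7 est8 by blast
qed

end
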